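(* For every $\xi\in V^*$ and every $a$ one has \[ d\nu^a=(a+1)\psi^{a+1},\qquad \xi\wedge\psi^a=-d\xi_V\wedge\psi^{a-1},\qquad \xi\wedge\nu^a=\xi_V\psi^a-d\xi_V\wedge\nu^{a-1}. \] In particular, with $\kappa_V=\sum_{j=1}^n\mu_{j,V}\otimes\ell_j$ (so that $d\kappa_V=\kappa=\sum_jd\mu_{j,V}\otimes\ell_j$), one has \[ \kappa\wedge\nu^a=\kappa_V\psi^a-d\kappa_V\wedge\nu^{a-1}. \]
   Context: $L$ is a free abelian group of rank $n$ with basis $\ell_1,\dots,\ell_n$, $V=\mathbb{R}\otimes L$, and $\mu_1,\dots,\mu_n$ is the dual basis of $V^*$. For $\xi\in V^*$, $\xi_V$ denotes the corresponding linear function on $V$. Let $\mathcal{A}=\Omega^\cdot(V)\otimes\Lambda^\cdot V^*$ be the graded-commutative differential graded algebra with differential $d(\omega\otimes\eta)=d\omega\otimes\eta$. Let $\theta$ be the derivation of $\mathcal{A}$ of degree $-1$ which vanishes on $\Omega^\cdot(V)$ and sends $\xi\in V^*\subset\Lambda^1V^*$ to $\xi_V$. Let $\Delta:\Lambda^\cdot V^*\to\mathcal{A}$ be the algebra homomorphism with $\Delta(\xi)=d\xi_V+\xi$. Put $\mathrm{vol}=\mu_1\wedge\dots\wedge\mu_n\otimes\ell_1\wedge\dots\wedge\ell_n\in\Lambda^nV^*\otimes\Lambda^nL$ and $\psi=\Delta(\mathrm{vol})=\sum_a\psi^a$ with $\psi^a\in\Omega^a(V)\otimes\Lambda^{n-a}V^*\otimes\Lambda^nL$.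 Define $\nu^a=\theta(\psi^a)\in\Omega^a(V)\otimes\Lambda^{n-1-a}V^*\otimes\Lambda^nL$, with $\psi^a=\nu^a=0$ for $a<0$. The elements $\ell_j$ are formal coefficients, so $\kappa_V$ is a $\mathrm{Sym}\,L_{\mathbb{R}}$-valued function and $\kappa$ a $\mathrm{Sym}\,L_{\mathbb{R}}$-valued 1-form. *)

theory Defs
  imports "HOL-Analysis.Analysis"
begin

text \<open>
Model of the algebra A = Omega(V) tensor Lambda V^*, with V = R^n, coordinates x_0..x_(n-1)
(the coordinates w.r.t. the basis l_1..l_n; the dual basis mu_j is the coordinate function).
Points of V are represented as functions nat => real (only the first n coordinates matter).
Since A is a graded-commutative tensor product of two exterior algebras (Koszul sign rule),
it is the algebra of smooth functions tensor the exterior algebra on 2n odd generators: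
generator i (i < n) is dx_i, generator n + j (j < n) is mu_j in Lambda^1 V^*.
An element of A is given by its coefficient functions: the coefficient of the basis
monomial e_S (product of the generators in S in increasing order) is a function V -> R.
\<close>

type_synonym form = "nat set \<Rightarrow> (nat \<Rightarrow> real) \<Rightarrow> real"

definition inv_count :: "nat set \<Rightarrow> nat set \<Rightarrow> nat" where
  "inv_count S T = card {(s, t). s \<in> S \<and> t \<in> T \<and> t < s}"

text \<open>sign with e_S wedge e_T = ksign S T * e_(S union T) for disjoint S, T\<close>
definition ksign :: "nat set \<Rightarrow> nat set \<Rightarrow> real" where
  "ksign S T = (-1) ^ inv_count S T"

definition fzero :: form where
  "fzero = (\<lambda>S x. 0)"

definition fadd :: "form \<Rightarrow> form \<Rightarrow> form" where
  "fadd a b = (\<lambda>S x. a S x + b S x)"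

definition fsub :: "form \<Rightarrow> form \<Rightarrow> form" where
  "fsub a b = (\<lambda>S x. a S x - b S x)"

definition fsmul :: "real \<Rightarrow> form \<Rightarrow> form" where
  "fsmul r a = (\<lambda>S x. r * a S x)"

definition fwedge :: "form \<Rightarrow> form \<Rightarrow> form" where
  "fwedge a b = (\<lambda>S x. \<Sum>T\<in>Pow S. ksign T (S - T) * a T x * b (S - T) x)"

definition fone :: form where
  "fone = (\<lambda>S x. if S = {} then 1 else 0)"

definition fun0 :: "((nat \<Rightarrow> real) \<Rightarrow> real) \<Rightarrow> form" where
  "fun0 f = (\<lambda>S x. if S = {} then f x else 0)"

definition partial_deriv :: "nat \<Rightarrow> ((nat \<Rightarrow> real) \<Rightarrow> real) \<Rightarrow> (nat \<Rightarrow> real) \<Rightarrow> real" where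
  "partial_deriv i f x = deriv (\<lambda>t. f (x(i := t))) (x i)"

definition fd :: "nat \<Rightarrow> form \<Rightarrow> form" where
  "fd n a = (\<lambda>S x. \<Sum>i\<in>S \<inter> {..<n}. ksign {i} (S - {i}) * partial_deriv i (a (S - {i})) x)"

text \<open>an element xi = sum_j c_j mu_j of V^*, as an element of Lambda^1 V^* inside A\<close>
definition covec :: "nat \<Rightarrow> (nat \<Rightarrow> real) \<Rightarrow> form" where
  "covec n c = (\<lambda>S x. \<Sum>j<n. if S = {n + j} then c j else 0)"

definition lin_fun :: "nat \<Rightarrow> (nat \<Rightarrow> real) \<Rightarrow> (nat \<Rightarrow> real) \<Rightarrow> real" where
  "lin_fun n c x = (\<Sum>j<n. c j * x j)"

text \<open>the derivation theta of degree -1: zero on Omega(V), mu_j |-> mu_(j,V) = x_j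
  (graded derivation, written out on basis monomials)\<close>
definition ftheta :: "nat \<Rightarrow> form \<Rightarrow> form" where
  "ftheta n a = (\<lambda>S x. \<Sum>s\<in>{n..<2*n} - S.
       (-1) ^ card {t\<in>S. t < s} * x (s - n) * a (insert s S) x)"

definition Delta1 :: "nat \<Rightarrow> (nat \<Rightarrow> real) \<Rightarrow> form" where
  "Delta1 n c = fadd (fd n (fun0 (lin_fun n c))) (covec n c)"

definition unitv :: "nat \<Rightarrow> nat \<Rightarrow> real" where
  "unitv j = (\<lambda>k. if k = j then 1 else 0)"

text \<open>psi = Delta(mu_1 wedge ... wedge mu_n) = Delta(mu_1) wedge ... wedge Delta(mu_n)
  (the constant factor l_1 wedge ... wedge l_n in Lambda^n L is omitted)\<close>
definition psi :: "nat \<Rightarrow> form" where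
  "psi n = foldr (\<lambda>j acc. fwedge (Delta1 n (unitv j)) acc) [0..<n] fone"

definition omega_part :: "nat \<Rightarrow> int \<Rightarrow> form \<Rightarrow> form" where
  "omega_part n p a = (\<lambda>S x. if int (card (S \<inter> {..<n})) = p then a S x else 0)"

definition psi_part :: "nat \<Rightarrow> int \<Rightarrow> form" where
  "psi_part n a = omega_part n a (psi n)"

definition nu :: "nat \<Rightarrow> int \<Rightarrow> form" where
  "nu n a = ftheta n (psi_part n a)"

text \<open>L-valued elements: j |-> coefficient of l_j (j < n)\<close>
definition kappaV :: "nat \<Rightarrow> nat \<Rightarrow> form" where
  "kappaV n j = (if j < n then fun0 (\<lambda>x. x j) else fzero)"

definition kappa1 :: "nat \<Rightarrow> nat \<Rightarrow> form" where
  "kappa1 n j = (if j < n then covec n (unitv j) else fzero)"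

end

theory Submission
  imports Defs
begin


definition cnt :: "nat set \<Rightarrow> nat \<Rightarrow> nat" where
  "cnt S g = card {t\<in>S. t < g}"

definition Eg :: "nat \<Rightarrow> form \<Rightarrow> form" where
  "Eg g a = (\<lambda>S x. if finite S \<and> g \<in> S then (-1) ^ cnt S g * a (S - {g}) x else 0)"

definition mulf :: "((nat \<Rightarrow> real) \<Rightarrow> real) \<Rightarrow> form \<Rightarrow> form" where
  "mulf f a = (\<lambda>S x. f x * a S x)"

definition VAN :: "form \<Rightarrow> bool" where
  "VAN a \<longleftrightarrow> (\<forall>S x. infinite S \<longrightarrow> a S x = 0)"

definition CST :: "form \<Rightarrow> bool" where
  "CST a \<longleftrightarrow> (\<forall>S x y. a S x = a S y)"

definition DF :: "form \<Rightarrow> bool" where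
  "DF a \<longleftrightarrow> (\<forall>S x i. (\<lambda>t. a S (x(i := t))) field_differentiable (at (x i)))"

lemma cnt_remove:
  assumes "finite S" "i \<in> S" "i \<noteq> g"
  shows "cnt S g = cnt (S - {i}) g + (if i < g then 1 else 0)"
proof (cases "i < g")
  case True
  have "{t\<in>S. t < g} = insert i {t\<in>S - {i}. t < g}" using assms True by auto
  then show ?thesis using assms True unfolding cnt_def by simp
next
  case False
  have "{t\<in>S. t < g} = {t\<in>S - {i}. t < g}" using assms False by auto
  then show ?thesis using False unfolding cnt_def by simp
qed

lemma cnt_insert:
  assumes "finite S" "s \<notin> S" "s \<noteq> g"
  shows "cnt (insert s S) g = cnt S g + (if s < g then 1 else 0)"
  using cnt_remove[of "insert s S" s g] assms by simp

lemma cnt_rem_self: "cnt (S - {g}) g = cnt S g"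
  unfolding cnt_def by (rule arg_cong[where f=card]) auto

lemma cnt_ins_self: "cnt (insert g S) g = cnt S g"
  unfolding cnt_def by (rule arg_cong[where f=card]) auto

lemma ksign_single: "ksign {g} R = (-1) ^ cnt R g"
proof -
  have "{(s, t). s \<in> {g} \<and> t \<in> R \<and> t < s} = Pair g ` {t\<in>R. t < g}" by auto
  then have "inv_count {g} R = cnt R g"
    unfolding inv_count_def cnt_def by (simp add: card_image inj_on_def)
  then show ?thesis unfolding ksign_def by simp
qed

lemma ksign_empty: "ksign {} R = 1"
  unfolding ksign_def inv_count_def by simp


lemma fwedge_one:
  assumes "finite J"
  shows "fwedge (\<lambda>S x. \<Sum>j\<in>J. if S = {h j} then w j else 0) a
       = (\<lambda>S x. \<Sum>j\<in>J. w j * Eg (h j) a S x)"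
proof (intro ext)
  fix S x
  show "fwedge (\<lambda>S x. \<Sum>j\<in>J. if S = {h j} then w j else 0) a S x
       = (\<Sum>j\<in>J. w j * Eg (h j) a S x)"
  proof (cases "finite S")
    case False
    then have "infinite (Pow S)" by simp
    then show ?thesis using False by (simp add: fwedge_def Eg_def)
  next
    case True
    have "fwedge (\<lambda>S x. \<Sum>j\<in>J. if S = {h j} then w j else 0) a S x
       = (\<Sum>T\<in>Pow S. \<Sum>j\<in>J. (if T = {h j} then w j * (ksign T (S - T) * a (S - T) x) else 0))"
      unfolding fwedge_def
      by (intro sum.cong refl) (simp add: sum_distrib_left sum_distrib_right if_distrib algebra_simps cong: if_cong)
    also have "\<dots> = (\<Sum>j\<in>J. \<Sum>T\<in>Pow S. (if T = {h j} then w j * (ksign T (S - T) * a (S - T) x) else 0))"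
      by (rule sum.swap)
    also have "\<dots> = (\<Sum>j\<in>J. w j * Eg (h j) a S x)"
    proof (intro sum.cong refl)
      fix j assume "j \<in> J"
      have "(\<Sum>T\<in>Pow S. (if T = {h j} then w j * (ksign T (S - T) * a (S - T) x) else 0))
          = (if {h j} \<in> Pow S then w j * (ksign {h j} (S - {h j}) * a (S - {h j}) x) else 0)"
        using True by (simp add: sum.delta')
      also have "\<dots> = w j * Eg (h j) a S x"
        using True by (simp add: Eg_def ksign_single cnt_rem_self)
      finally show "(\<Sum>T\<in>Pow S. (if T = {h j} then w j * (ksign T (S - T) * a (S - T) x) else 0))
          = w j * Eg (h j) a S x" .
    qed
    finally show ?thesis .
  qed
qed

lemma covec_alt: "covec n c = (\<lambda>S x. \<Sum>j\<in>{..<n}. if S = {n + j} then c j else 0)"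
  unfolding covec_def by (simp add: lessThan_def)

lemma fwedge_covec:
  "fwedge (covec n c) a = (\<lambda>S x. \<Sum>j<n. c j * Eg (n + j) a S x)"
  unfolding covec_alt by (rule fwedge_one) simp

lemma pd_lin:
  assumes "i < n"
  shows "partial_deriv i (lin_fun n c) x = c i"
proof -
  have e: "(\<lambda>t. lin_fun n c (x(i := t))) = (\<lambda>t. c i * t + (\<Sum>j\<in>{..<n} - {i}. c j * x j))"
  proof
    fix t
    have "lin_fun n c (x(i := t)) = c i * t + (\<Sum>j\<in>{..<n} - {i}. c j * (x(i:=t)) j)"
      unfolding lin_fun_def using assms by (simp add: sum.remove[of "{..<n}" i])
    also have "(\<Sum>j\<in>{..<n} - {i}. c j * (x(i:=t)) j) = (\<Sum>j\<in>{..<n} - {i}. c j * x j)"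
      by (intro sum.cong) auto
    finally show "lin_fun n c (x(i := t)) = c i * t + (\<Sum>j\<in>{..<n} - {i}. c j * x j)" .
  qed
  show ?thesis unfolding partial_deriv_def e
    by (subst deriv_add) (auto intro!: derivative_intros)
qed

lemma pd_const: "(\<And>y. f y = k) \<Longrightarrow> partial_deriv i f x = 0"
  unfolding partial_deriv_def by simp

lemma fd_fun0_lin:
  "fd n (fun0 (lin_fun n c)) = (\<lambda>S x. \<Sum>j\<in>{..<n}. if S = {j} then c j else 0)"
proof (intro ext)
  fix S x
  show "fd n (fun0 (lin_fun n c)) S x = (\<Sum>j\<in>{..<n}. if S = {j} then c j else 0)"
  proof (cases "\<exists>j<n. S = {j}")
    case True
    then obtain j where j: "j < n" "S = {j}" by auto
    have k: "ksign {j} {} = 1" by (simp add: ksign_def inv_count_def)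
    have "fd n (fun0 (lin_fun n c)) S x = ksign {j} {} * partial_deriv j (lin_fun n c) x"
      using j by (simp add: fd_def fun0_def)
    then show ?thesis using j k by (simp add: pd_lin)
  next
    case False
    have "fd n (fun0 (lin_fun n c)) S x = 0"
      unfolding fd_def
    proof (intro sum.neutral ballI)
      fix i assume i: "i \<in> S \<inter> {..<n}"
      then have "S - {i} \<noteq> {}" using False by auto
      then show "ksign {i} (S - {i}) * partial_deriv i (fun0 (lin_fun n c) (S - {i})) x = 0"
        by (simp add: fun0_def pd_const)
    qed
    moreover have "(\<Sum>j\<in>{..<n}. if S = {j} then c j else 0) = 0"
      using False by (intro sum.neutral) auto
    ultimately show ?thesis by simp
  qed
qed

lemma fwedge_dlin:
  "fwedge (fd n (fun0 (lin_fun n c))) a = (\<lambda>S x. \<Sum>j<n. c j * Eg j a S x)"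
  unfolding fd_fun0_lin by (subst fwedge_one[where h="\<lambda>j. j"]) (auto simp: lessThan_def)

lemma fwedge_fun0:
  assumes "VAN a"
  shows "fwedge (fun0 f) a = mulf f a"
proof (intro ext)
  fix S x
  show "fwedge (fun0 f) a S x = mulf f a S x"
  proof (cases "finite S")
    case False
    then show ?thesis using assms by (simp add: fwedge_def mulf_def VAN_def)
  next
    case True
    have "fwedge (fun0 f) a S x = (\<Sum>T\<in>Pow S. if T = {} then f x * a S x else 0)"
      unfolding fwedge_def fun0_def by (intro sum.cong refl) (auto simp: ksign_empty)
    also have "\<dots> = f x * a S x" using True by (simp add: sum.delta')
    finally show ?thesis by (simp add: mulf_def)
  qed
qed

lemma fwedge_fadd_left: "fwedge (fadd u v) a = fadd (fwedge u a) (fwedge v a)"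
  unfolding fwedge_def fadd_def by (simp add: algebra_simps sum.distrib)


lemma Eg_fadd: "Eg g (fadd a b) = fadd (Eg g a) (Eg g b)"
  unfolding Eg_def fadd_def by (auto simp: fun_eq_iff algebra_simps)

lemma Eg_fsmul: "Eg g (fsmul r a) = fsmul r (Eg g a)"
  unfolding Eg_def fsmul_def by (auto simp: fun_eq_iff algebra_simps)

lemma Eg_fsub: "Eg g (fsub a b) = fsub (Eg g a) (Eg g b)"
  unfolding Eg_def fsub_def by (auto simp: fun_eq_iff algebra_simps)

lemma Eg_fzero: "Eg g fzero = fzero"
  unfolding Eg_def fzero_def by (auto simp: fun_eq_iff)

lemma Eg_self: "Eg g (Eg g a) = fzero"
  unfolding Eg_def fzero_def by (auto simp: fun_eq_iff)

lemma Eg_anti: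
  assumes "g \<noteq> h"
  shows "Eg g (Eg h a) = fsmul (-1) (Eg h (Eg g a))"
proof (intro ext)
  fix S x
  show "Eg g (Eg h a) S x = fsmul (-1) (Eg h (Eg g a)) S x"
  proof (cases "finite S \<and> g \<in> S \<and> h \<in> S")
    case True
    then have f: "finite S" "g \<in> S" "h \<in> S" by auto
    have c1: "cnt S h = cnt (S - {g}) h + (if g < h then 1 else 0)"
      using cnt_remove[OF f(1,2)] assms by simp
    have c2: "cnt S g = cnt (S - {h}) g + (if h < g then 1 else 0)"
      using cnt_remove[OF f(1,3)] assms by simp
    have e: "S - {g} - {h} = S - {h} - {g}" by auto
    show ?thesis using f assms c1 c2 e
      by (cases "g < h") (auto simp: Eg_def fsmul_def power_add)
  next
    case False
    then show ?thesis unfolding Eg_def fsmul_def by auto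
  qed
qed

lemma omega_fadd: "omega_part n p (fadd a b) = fadd (omega_part n p a) (omega_part n p b)"
  unfolding omega_part_def fadd_def by (auto simp: fun_eq_iff)

lemma omega_fsmul: "omega_part n p (fsmul r a) = fsmul r (omega_part n p a)"
  unfolding omega_part_def fsmul_def by (auto simp: fun_eq_iff)

lemma omega_E_lo:
  assumes "g < n"
  shows "omega_part n p (Eg g a) = Eg g (omega_part n (p - 1) a)"
proof (intro ext)
  fix S x
  show "omega_part n p (Eg g a) S x = Eg g (omega_part n (p - 1) a) S x"
  proof (cases "finite S \<and> g \<in> S")
    case True
    have "S \<inter> {..<n} = insert g ((S - {g}) \<inter> {..<n})" using True assms by auto
    then have "card (S \<inter> {..<n}) = Suc (card ((S - {g}) \<inter> {..<n}))" by simp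
    then show ?thesis using True unfolding omega_part_def Eg_def by auto
  next
    case False
    then show ?thesis unfolding omega_part_def Eg_def by auto
  qed
qed

lemma omega_E_hi:
  assumes "n \<le> g"
  shows "omega_part n p (Eg g a) = Eg g (omega_part n p a)"
proof (intro ext)
  fix S x
  have "(S - {g}) \<inter> {..<n} = S \<inter> {..<n}" using assms by auto
  then show "omega_part n p (Eg g a) S x = Eg g (omega_part n p a) S x"
    unfolding omega_part_def Eg_def by auto
qed


lemma theta_fadd: "ftheta n (fadd a b) = fadd (ftheta n a) (ftheta n b)"
  unfolding ftheta_def fadd_def by (simp add: fun_eq_iff algebra_simps sum.distrib)

lemma theta_fsmul: "ftheta n (fsmul r a) = fsmul r (ftheta n a)"
  unfolding ftheta_def fsmul_def by (simp add: fun_eq_iff algebra_simps sum_distrib_left)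

lemma theta_E:
  assumes "VAN a"
  shows "ftheta n (Eg g a) = fsub (if n \<le> g \<and> g < 2 * n then mulf (\<lambda>x. x (g - n)) a else fzero)
                               (Eg g (ftheta n a))"
proof (intro ext)
  fix S x
  define M where "M = {n..<2*n}"
  have M: "finite M" unfolding M_def by simp
  define R where "R = (if n \<le> g \<and> g < 2 * n then mulf (\<lambda>x. x (g - n)) a else fzero)"
  show "ftheta n (Eg g a) S x = fsub R (Eg g (ftheta n a)) S x"
  proof (cases "finite S")
    case False
    then have "ftheta n (Eg g a) S x = 0" unfolding ftheta_def Eg_def by simp
    moreover have "R S x = 0" using False assms unfolding R_def VAN_def mulf_def fzero_def by auto
    moreover have "Eg g (ftheta n a) S x = 0" using False unfolding Eg_def by simp
    ultimately show ?thesis unfolding fsub_def by simp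
  next
    case fin: True
    show ?thesis
    proof (cases "g \<in> S")
      case False
      have "ftheta n (Eg g a) S x
          = (\<Sum>s\<in>M - S. if s = g then x (g - n) * a S x else 0)"
        unfolding ftheta_def M_def[symmetric]
      proof (intro sum.cong refl)
        fix s assume s: "s \<in> M - S"
        show "(-1) ^ card {t\<in>S. t < s} * x (s - n) * Eg g a (insert s S) x
            = (if s = g then x (g - n) * a S x else 0)"
        proof (cases "s = g")
          case True
          then have "insert s S - {g} = S" using False by auto
          then show ?thesis using True fin False
            by (simp add: Eg_def cnt_ins_self cnt_def[symmetric] power_add[symmetric] mult_ac)
        next
          case ne: False
          then show ?thesis using False by (simp add: Eg_def)
        qed
      qed
      also have "\<dots> = (if g \<in> M then x (g - n) * a S x else 0)"
        using M False by (simp add: sum.delta')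
      finally show ?thesis using False unfolding R_def fsub_def Eg_def M_def
        by (simp add: mulf_def fzero_def)
    next
      case True
      have split: "(\<Sum>s\<in>M - (S - {g}). f s) = (if g \<in> M then f g else 0) + (\<Sum>s\<in>M - S. f s)"
        for f :: "nat \<Rightarrow> real"
      proof (cases "g \<in> M")
        case True
        have "M - (S - {g}) = insert g (M - S)" using True \<open>g \<in> S\<close> by auto
        then show ?thesis using M \<open>g \<in> S\<close> True by simp
      next
        case False
        have "M - (S - {g}) = M - S" using False by auto
        then show ?thesis using False by simp
      qed
      have lhs: "ftheta n (Eg g a) S x = (\<Sum>s\<in>M - S. (-1) ^ cnt S s * x (s - n) *
                   ((-1) ^ cnt (insert s S) g * a (insert s (S - {g})) x))"
        unfolding ftheta_def M_def[symmetric] cnt_def[symmetric]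
      proof (intro sum.cong refl)
        fix s assume s: "s \<in> M - S"
        have "insert s S - {g} = insert s (S - {g})" using s True by auto
        then show "(-1) ^ cnt S s * x (s - n) * Eg g a (insert s S) x =
             (-1) ^ cnt S s * x (s - n) * ((-1) ^ cnt (insert s S) g * a (insert s (S - {g})) x)"
          using fin True by (simp add: Eg_def)
      qed
      have th: "ftheta n a (S - {g}) x = (if g \<in> M then (-1) ^ cnt (S - {g}) g * x (g - n) * a S x else 0)
              + (\<Sum>s\<in>M - S. (-1) ^ cnt (S - {g}) s * x (s - n) * a (insert s (S - {g})) x)"
        unfolding ftheta_def M_def[symmetric] cnt_def[symmetric]
        using split True by (simp add: insert_absorb)
      have sgn: "(-1) ^ cnt S s * ((-1) ^ cnt (insert s S) g :: real)
               = - ((-1) ^ cnt S g * (-1) ^ cnt (S - {g}) s)" if s: "s \<in> M - S" for s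
      proof -
        have sg: "s \<noteq> g" using s True by auto
        have c1: "cnt S s = cnt (S - {g}) s + (if g < s then 1 else 0)"
          using cnt_remove[OF fin True] sg by simp
        have c2: "cnt (insert s S) g = cnt S g + (if s < g then 1 else 0)"
          using cnt_insert[OF fin] s sg by simp
        show ?thesis using sg c1 c2 by (cases "s < g") (auto simp: power_add)
      qed
      have "ftheta n (Eg g a) S x = (\<Sum>s\<in>M - S. - ((-1) ^ cnt S g *
               ((-1) ^ cnt (S - {g}) s * x (s - n) * a (insert s (S - {g})) x)))"
        unfolding lhs
      proof (intro sum.cong refl)
        fix s assume s: "s \<in> M - S"
        show "(-1) ^ cnt S s * x (s - n) * ((-1) ^ cnt (insert s S) g * a (insert s (S - {g})) x)
            = - ((-1) ^ cnt S g * ((-1) ^ cnt (S - {g}) s * x (s - n) * a (insert s (S - {g})) x))"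
          using sgn[OF s] by (metis (no_types, lifting) mult.assoc mult.left_commute mult_minus_left)
      qed
      also have "\<dots> = - ((-1) ^ cnt S g * (\<Sum>s\<in>M - S.
               ((-1) ^ cnt (S - {g}) s * x (s - n) * a (insert s (S - {g})) x)))"
        by (simp add: sum_negf sum_distrib_left)
      finally have L: "ftheta n (Eg g a) S x = \<dots>" .
      have pp: "(-1) ^ cnt S g * ((-1) ^ cnt S g :: real) = 1"
        by (simp add: power_add[symmetric])
      have "Eg g (ftheta n a) S x = (-1) ^ cnt S g * ftheta n a (S - {g}) x"
        using fin True by (simp add: Eg_def)
      then have E: "Eg g (ftheta n a) S x = (if g \<in> M then x (g - n) * a S x else 0)
          + (-1) ^ cnt S g * (\<Sum>s\<in>M - S. (-1) ^ cnt (S - {g}) s * x (s - n) * a (insert s (S - {g})) x)"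
        unfolding th by (auto simp: cnt_rem_self algebra_simps pp)
      show ?thesis unfolding fsub_def R_def L E M_def
        by (simp add: mulf_def fzero_def)
    qed
  qed
qed




lemma pd_cmult:
  assumes "(\<lambda>t. f (x(i := t))) field_differentiable (at (x i))"
  shows "partial_deriv i (\<lambda>y. c * f y) x = c * partial_deriv i f x"
  unfolding partial_deriv_def using assms by (simp add: deriv_cmult)

lemma pd_add:
  assumes "(\<lambda>t. f (x(i := t))) field_differentiable (at (x i))"
    "(\<lambda>t. g (x(i := t))) field_differentiable (at (x i))"
  shows "partial_deriv i (\<lambda>y. f y + g y) x = partial_deriv i f x + partial_deriv i g x"
  unfolding partial_deriv_def using assms by simp

lemma pd_zero: "partial_deriv i (\<lambda>y. 0) x = 0"
  unfolding partial_deriv_def by simp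

lemma VAN_zero_fun: "VAN a \<Longrightarrow> infinite S \<Longrightarrow> a S = (\<lambda>y. 0)"
  unfolding VAN_def by auto

lemma pd_Eg:
  assumes "DF a"
  shows "partial_deriv i (Eg g a T) x
     = (if finite T \<and> g \<in> T then (-1) ^ cnt T g * partial_deriv i (a (T - {g})) x else 0)"
proof (cases "finite T \<and> g \<in> T")
  case True
  then have "Eg g a T = (\<lambda>y. (-1) ^ cnt T g * a (T - {g}) y)" unfolding Eg_def by auto
  then show ?thesis using True assms unfolding DF_def by (simp add: pd_cmult)
next
  case False
  then have "Eg g a T = (\<lambda>y. 0)" unfolding Eg_def by auto
  then show ?thesis using False by (auto simp: pd_zero)
qed

lemma fd_E:
  assumes "DF a"
  shows "fd n (Eg g a) = fsmul (-1) (Eg g (fd n a))"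
proof (intro ext)
  fix S x
  show "fd n (Eg g a) S x = fsmul (-1) (Eg g (fd n a)) S x"
  proof (cases "finite S \<and> g \<in> S")
    case False
    then have "fd n (Eg g a) S x = 0"
      unfolding fd_def using assms by (intro sum.neutral) (auto simp: pd_Eg)
    then show ?thesis using False unfolding fsmul_def by (auto simp: Eg_def)
  next
    case True
    then have fin: "finite S" and gS: "g \<in> S" by auto
    have "fd n (Eg g a) S x = (\<Sum>i\<in>S \<inter> {..<n}. if i \<noteq> g then
        ksign {i} (S - {i}) * ((-1) ^ cnt (S - {i}) g * partial_deriv i (a (S - {i} - {g})) x) else 0)"
      unfolding fd_def using assms fin gS by (intro sum.cong refl) (auto simp: pd_Eg)
    also have "\<dots> = (\<Sum>i\<in>{i\<in>S \<inter> {..<n}. i \<noteq> g}.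
        ksign {i} (S - {i}) * ((-1) ^ cnt (S - {i}) g * partial_deriv i (a (S - {i} - {g})) x))"
      by (rule sum.inter_filter[symmetric]) simp
    also have "{i\<in>S \<inter> {..<n}. i \<noteq> g} = (S - {g}) \<inter> {..<n}" by auto
    also have "(\<Sum>i\<in>(S - {g}) \<inter> {..<n}.
        ksign {i} (S - {i}) * ((-1) ^ cnt (S - {i}) g * partial_deriv i (a (S - {i} - {g})) x))
      = (\<Sum>i\<in>(S - {g}) \<inter> {..<n}. - ((-1) ^ cnt S g *
           (ksign {i} (S - {g} - {i}) * partial_deriv i (a (S - {g} - {i})) x)))"
    proof (intro sum.cong refl)
      fix i assume i: "i \<in> (S - {g}) \<inter> {..<n}"
      then have iS: "i \<in> S" and ig: "i \<noteq> g" by auto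
      have c1: "cnt S i = cnt (S - {g}) i + (if g < i then 1 else 0)"
        using cnt_remove[OF fin gS] ig by simp
      have c2: "cnt S g = cnt (S - {i}) g + (if i < g then 1 else 0)"
        using cnt_remove[OF fin iS] ig by simp
      have e: "S - {i} - {g} = S - {g} - {i}" by auto
      have sg: "ksign {i} (S - {i}) * (-1) ^ cnt (S - {i}) g
          = - ((-1) ^ cnt S g * ksign {i} (S - {g} - {i}) :: real)"
        unfolding ksign_single cnt_rem_self
        using ig c1 c2 by (cases "i < g") (auto simp: power_add)
      show "ksign {i} (S - {i}) * ((-1) ^ cnt (S - {i}) g * partial_deriv i (a (S - {i} - {g})) x)
        = - ((-1) ^ cnt S g * (ksign {i} (S - {g} - {i}) * partial_deriv i (a (S - {g} - {i})) x))"
        unfolding e using sg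
        by (metis (no_types, lifting) mult.assoc mult_minus_left)
    qed
    also have "\<dots> = - ((-1) ^ cnt S g * fd n a (S - {g}) x)"
      unfolding fd_def by (simp add: sum_negf sum_distrib_left)
    finally show ?thesis using fin gS by (simp add: fsmul_def Eg_def)
  qed
qed

lemma fd_fadd:
  assumes "DF a" "DF b"
  shows "fd n (fadd a b) = fadd (fd n a) (fd n b)"
  using assms unfolding fd_def fadd_def DF_def
  by (simp add: fun_eq_iff pd_add algebra_simps sum.distrib)

lemma fd_fsmul:
  assumes "DF a"
  shows "fd n (fsmul r a) = fsmul r (fd n a)"
  using assms unfolding fd_def fsmul_def DF_def
  by (simp add: fun_eq_iff pd_cmult algebra_simps sum_distrib_left)

lemma fd_cst:
  assumes "CST a"
  shows "fd n a = fzero"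
proof -
  have "partial_deriv i (a T) x = 0" for i T x
    using assms unfolding CST_def by (intro pd_const[where k="a T x"]) auto
  then show ?thesis unfolding fd_def fzero_def by simp
qed

lemma fd_mulf:
  assumes "CST Y" "VAN Y" "m < n"
  shows "fd n (mulf (\<lambda>x. x m) Y) = Eg m Y"
proof (intro ext)
  fix S x
  have pd: "partial_deriv i (mulf (\<lambda>x. x m) Y T) x = (if i = m then Y T x else 0)" for i T
  proof -
    have "mulf (\<lambda>x. x m) Y T = (\<lambda>y. y m * Y T x)"
      using assms(1) unfolding mulf_def CST_def by metis
    then show ?thesis unfolding partial_deriv_def by (auto simp: fun_upd_apply)
  qed
  show "fd n (mulf (\<lambda>x. x m) Y) S x = Eg m Y S x"
  proof -
    have "fd n (mulf (\<lambda>x. x m) Y) S x = (\<Sum>i\<in>S \<inter> {..<n}. if i = m then ksign {m} (S - {m}) * Y (S - {m}) x else 0)"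
      unfolding fd_def pd by (intro sum.cong refl) auto
    also have "\<dots> = (if m \<in> S then ksign {m} (S - {m}) * Y (S - {m}) x else 0)"
      using assms(3) by (simp add: sum.delta')
    also have "\<dots> = Eg m Y S x"
    proof (cases "finite S")
      case True
      then show ?thesis by (simp add: Eg_def ksign_single cnt_rem_self)
    next
      case False
      then have "infinite (S - {m})" by simp
      then show ?thesis using assms(2) False by (simp add: Eg_def VAN_def)
    qed
    finally show ?thesis .
  qed
qed



lemma fdiff_coord: "(\<lambda>t. (x(i := t)) k) field_differentiable (at z)"
  by (cases "k = i") (auto simp: fun_upd_apply)

lemma DF_cst: "CST a \<Longrightarrow> DF a"
proof -
  assume a: "CST a"
  have "(\<lambda>t. a S (x(i := t))) = (\<lambda>t. a S x)" for S x i using a unfolding CST_def by metis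
  then show ?thesis unfolding DF_def by simp
qed

lemma DF_fzero: "DF fzero"
  unfolding DF_def fzero_def by simp

lemma DF_fadd: "DF a \<Longrightarrow> DF b \<Longrightarrow> DF (fadd a b)"
  unfolding DF_def fadd_def by (auto intro!: field_differentiable_add)

lemma DF_fsub: "DF a \<Longrightarrow> DF b \<Longrightarrow> DF (fsub a b)"
  unfolding DF_def fsub_def by (auto intro!: field_differentiable_diff)

lemma DF_fsmul: "DF a \<Longrightarrow> DF (fsmul r a)"
  unfolding DF_def fsmul_def by (auto intro!: field_differentiable_mult)

lemma fdc_mul: "f field_differentiable (at z) \<Longrightarrow> (\<lambda>t. c * f t) field_differentiable (at z)"
  by (intro field_differentiable_mult field_differentiable_const)

lemma DF_Eg: "DF a \<Longrightarrow> DF (Eg g a)"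
  unfolding DF_def Eg_def
proof (intro allI)
  fix S x i assume a: "\<forall>S x i. (\<lambda>t. a S (x(i := t))) field_differentiable at (x i)"
  show "(\<lambda>t. if finite S \<and> g \<in> S then (- 1) ^ cnt S g * a (S - {g}) (x(i := t)) else 0)
        field_differentiable at (x i)"
  proof (cases "finite S \<and> g \<in> S")
    case True
    then show ?thesis using a by (simp add: fdc_mul)
  next
    case False
    then show ?thesis by (simp only: if_not_P if_False field_differentiable_const)
  qed
qed

lemma DF_omega: "DF a \<Longrightarrow> DF (omega_part n p a)"
  unfolding DF_def omega_part_def
proof (intro allI)
  fix S x i assume a: "\<forall>S x i. (\<lambda>t. a S (x(i := t))) field_differentiable at (x i)"
  show "(\<lambda>t. if int (card (S \<inter> {..<n})) = p then a S (x(i := t)) else 0) field_differentiable at (x i)"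
    using a by (cases "int (card (S \<inter> {..<n})) = p") simp_all
qed

lemma DF_mulf_coord: "DF a \<Longrightarrow> DF (mulf (\<lambda>x. x m) a)"
  unfolding DF_def mulf_def by (simp add: field_differentiable_mult fdiff_coord del: fun_upd_apply)

lemma DF_theta: "DF a \<Longrightarrow> DF (ftheta n a)"
proof -
  assume a: "DF a"
  show ?thesis unfolding DF_def ftheta_def
  proof (intro allI field_differentiable_sum ballI)
    fix S x i s
    show "(\<lambda>t. (-1) ^ card {u \<in> S. u < s} * (x(i := t)) (s - n) * a (insert s S) (x(i := t)))
          field_differentiable at (x i)"
      using a unfolding DF_def
      by (intro field_differentiable_mult field_differentiable_const fdiff_coord) auto
  qed
qed

lemma VAN_Eg: "VAN (Eg g a)"
  unfolding VAN_def Eg_def by auto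

lemma VAN_fone: "VAN fone"
  unfolding VAN_def fone_def by auto

lemma VAN_fadd: "VAN a \<Longrightarrow> VAN b \<Longrightarrow> VAN (fadd a b)"
  unfolding VAN_def fadd_def by auto

lemma VAN_omega: "VAN a \<Longrightarrow> VAN (omega_part n p a)"
  unfolding VAN_def omega_part_def by auto

lemma VAN_theta: "VAN a \<Longrightarrow> VAN (ftheta n a)"
  unfolding VAN_def ftheta_def by auto

lemma CST_Eg: "CST a \<Longrightarrow> CST (Eg g a)"
  unfolding CST_def Eg_def by (intro allI) (smt (verit))

lemma CST_fone: "CST fone"
  unfolding CST_def fone_def by auto

lemma CST_fadd: "CST a \<Longrightarrow> CST b \<Longrightarrow> CST (fadd a b)"
  unfolding CST_def fadd_def by (intro allI) (smt (verit))

lemma CST_omega: "CST a \<Longrightarrow> CST (omega_part n p a)"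
  unfolding CST_def omega_part_def by (intro allI) (smt (verit))

lemma fd_fsub:
  assumes "DF a" "DF b"
  shows "fd n (fsub a b) = fsub (fd n a) (fd n b)"
proof -
  have h: "partial_deriv i (\<lambda>y. a T y - b T y) x = partial_deriv i (a T) x - partial_deriv i (b T) x"
    for i T x using assms unfolding DF_def partial_deriv_def by simp
  show ?thesis
    unfolding fd_def fsub_def by (simp only: h right_diff_distrib sum_subtractf)
qed

lemma fd_fzero: "fd n fzero = fzero"
  by (rule fd_cst) (simp add: CST_def fzero_def)

definition ps :: "nat \<Rightarrow> nat \<Rightarrow> form" where
  "ps n m = foldr (\<lambda>j acc. fwedge (Delta1 n (unitv j)) acc) [m..<n] fone"

lemma ps_n: "ps n n = fone"
  unfolding ps_def by simp

lemma psi_ps: "psi n = ps n 0"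
  unfolding ps_def psi_def by simp

lemma wedge_Delta1:
  assumes "m < n"
  shows "fwedge (Delta1 n (unitv m)) a = fadd (Eg m a) (Eg (n + m) a)"
proof -
  have s1: "(\<Sum>j<n. unitv m j * f j) = f m" for f :: "nat \<Rightarrow> real"
  proof -
    have "(\<Sum>j<n. unitv m j * f j) = (\<Sum>j<n. if j = m then f j else 0)"
      by (intro sum.cong) (auto simp: unitv_def)
    then show ?thesis using assms by (simp add: sum.delta)
  qed
  show ?thesis
    unfolding Delta1_def fwedge_fadd_left fwedge_dlin fwedge_covec
    by (simp add: fadd_def s1[of "\<lambda>j. Eg j a _ _"] s1[of "\<lambda>j. Eg (n + j) a _ _"])
qed

lemma ps_step:
  assumes "m < n"
  shows "ps n m = fadd (Eg m (ps n (Suc m))) (Eg (n + m) (ps n (Suc m)))"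
proof -
  have "[m..<n] = m # [Suc m..<n]" using assms by (simp add: upt_conv_Cons)
  then show ?thesis unfolding ps_def using wedge_Delta1[OF assms] by simp
qed

lemma ps_props:
  assumes "m \<le> n"
  shows "VAN (ps n m) \<and> CST (ps n m)"
  using assms
proof (induction m rule: inc_induct)
  case base
  then show ?case by (simp add: ps_n VAN_fone CST_fone)
next
  case (step m)
  then show ?case by (simp add: ps_step VAN_fadd VAN_Eg CST_fadd CST_Eg)
qed



lemma F_zero:
  assumes "m \<le> n"
  shows "\<forall>k. m \<le> k \<and> k < n \<longrightarrow> fadd (Eg k (ps n m)) (Eg (n + k) (ps n m)) = fzero"
  using assms
proof (induction m rule: inc_induct)
  case base
  then show ?case by auto
next
  case (step m)
  define X where "X = ps n (Suc m)"
  have pm: "ps n m = fadd (Eg m X) (Eg (n + m) X)" unfolding X_def using step(2) by (rule ps_step)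
  show ?case
  proof (intro allI impI)
    fix k assume k: "m \<le> k \<and> k < n"
    show "fadd (Eg k (ps n m)) (Eg (n + k) (ps n m)) = fzero"
    proof (cases "k = m")
      case True
      have a: "Eg (n + m) (Eg m X) = fsmul (-1) (Eg m (Eg (n + m) X))"
        using step(2) by (intro Eg_anti) simp
      show ?thesis unfolding pm True Eg_fadd Eg_self a
        by (simp add: fun_eq_iff fadd_def fsmul_def fzero_def)
    next
      case False
      then have kk: "Suc m \<le> k" "k < n" using k by auto
      then have IH: "fadd (Eg k X) (Eg (n + k) X) = fzero" using step(3) unfolding X_def by blast
      then have h: "Eg (n + k) X = fsmul (-1) (Eg k X)"
        by (simp add: fun_eq_iff fadd_def fsmul_def fzero_def) (metis add.commute add_eq_0_iff2)
      have a1: "Eg k (Eg m X) = fsmul (-1) (Eg m (Eg k X))" using False by (intro Eg_anti) simp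
      have a2: "Eg k (Eg (n + m) X) = fsmul (-1) (Eg (n + m) (Eg k X))" using kk by (intro Eg_anti) simp
      have a3: "Eg (n + k) (Eg m X) = fsmul (-1) (Eg m (Eg (n + k) X))" using step(2) by (intro Eg_anti) simp
      have a4: "Eg (n + k) (Eg (n + m) X) = fsmul (-1) (Eg (n + m) (Eg (n + k) X))" using False by (intro Eg_anti) simp
      show ?thesis unfolding pm Eg_fadd a1 a2 a3 a4 h Eg_fsmul
        by (simp add: fun_eq_iff fadd_def fsmul_def fzero_def)
    qed
  qed
qed

lemma psi_props: "VAN (psi n) \<and> CST (psi n)"
  unfolding psi_ps using ps_props[of 0 n] by simp

lemma VAN_psi_part: "VAN (psi_part n a)"
  unfolding psi_part_def using psi_props by (simp add: VAN_omega)

lemma CST_psi_part: "CST (psi_part n a)"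
  unfolding psi_part_def using psi_props by (simp add: CST_omega)

lemma EJ:
  assumes "j < n"
  shows "Eg (n + j) (psi_part n a) = fsmul (-1) (Eg j (psi_part n (a - 1)))"
proof -
  have "fadd (Eg j (psi n)) (Eg (n + j) (psi n)) = fzero"
    using F_zero[of 0 n] assms unfolding psi_ps by simp
  then have h: "Eg (n + j) (psi n) = fsmul (-1) (Eg j (psi n))"
    by (simp add: fun_eq_iff fadd_def fsmul_def fzero_def) (metis add.commute add_eq_0_iff2)
  have "Eg (n + j) (psi_part n a) = omega_part n a (Eg (n + j) (psi n))"
    unfolding psi_part_def by (simp add: omega_E_hi)
  also have "\<dots> = fsmul (-1) (omega_part n a (Eg j (psi n)))" by (simp add: h omega_fsmul)
  also have "\<dots> = fsmul (-1) (Eg j (psi_part n (a - 1)))"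
    unfolding psi_part_def using assms by (simp add: omega_E_lo)
  finally show ?thesis .
qed

lemma claim2:
  "fwedge (covec n c) (psi_part n a)
        = fsmul (-1) (fwedge (fd n (fun0 (lin_fun n c))) (psi_part n (a - 1)))"
  unfolding fwedge_covec fwedge_dlin
  by (simp add: fun_eq_iff EJ fsmul_def sum_negf sum_distrib_left)

lemma nuJ:
  assumes "j < n"
  shows "Eg (n + j) (nu n a) S x = x j * psi_part n a S x - Eg j (nu n (a - 1)) S x"
proof -
  have t1: "ftheta n (Eg (n + j) (psi_part n a))
     = fsub (mulf (\<lambda>x. x j) (psi_part n a)) (Eg (n + j) (nu n a))"
    using assms unfolding nu_def by (simp add: theta_E VAN_psi_part)
  have t2: "ftheta n (Eg j (psi_part n (a - 1))) = fsub fzero (Eg j (nu n (a - 1)))"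
    using assms unfolding nu_def by (simp add: theta_E VAN_psi_part)
  have "ftheta n (Eg (n + j) (psi_part n a)) = fsmul (-1) (ftheta n (Eg j (psi_part n (a - 1))))"
    using assms by (simp add: EJ theta_fsmul)
  then have "fsub (mulf (\<lambda>x. x j) (psi_part n a)) (Eg (n + j) (nu n a))
      = fsmul (-1) (fsub fzero (Eg j (nu n (a - 1))))" unfolding t1 t2 .
  then have "x j * psi_part n a S x - Eg (n + j) (nu n a) S x = Eg j (nu n (a - 1)) S x"
    by (simp add: fun_eq_iff fsub_def fsmul_def fzero_def mulf_def)
  then show ?thesis by simp
qed

lemma claim3:
  "fwedge (covec n c) (nu n a)
        = fsub (fwedge (fun0 (lin_fun n c)) (psi_part n a))
               (fwedge (fd n (fun0 (lin_fun n c))) (nu n (a - 1)))"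
proof -
  have v: "VAN (psi_part n a)" by (rule VAN_psi_part)
  show ?thesis
    unfolding fwedge_covec fwedge_dlin fwedge_fun0[OF v]
  proof (intro ext)
    fix S x
    have "(\<Sum>j<n. c j * Eg (n + j) (nu n a) S x)
        = (\<Sum>j<n. c j * x j * psi_part n a S x - c j * Eg j (nu n (a - 1)) S x)"
      by (intro sum.cong refl) (simp add: nuJ right_diff_distrib mult.assoc)
    also have "\<dots> = lin_fun n c x * psi_part n a S x - (\<Sum>j<n. c j * Eg j (nu n (a - 1)) S x)"
      unfolding lin_fun_def by (simp add: sum_subtractf sum_distrib_right)
    finally show "(\<Sum>j<n. c j * Eg (n + j) (nu n a) S x) =
        fsub (mulf (lin_fun n c) (psi_part n a)) (\<lambda>S x. \<Sum>j<n. c j * Eg j (nu n (a - 1)) S x) S x"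
      by (simp add: fsub_def mulf_def)
  qed
qed



lemma claim1_ps:
  assumes "m \<le> n"
  shows "\<forall>b. fd n (ftheta n (omega_part n b (ps n m))) = fsmul (of_int b + 1) (omega_part n (b + 1) (ps n m))"
  using assms
proof (induction m rule: inc_induct)
  case base
  show ?case
  proof
    fix b :: int
    have "ftheta n (omega_part n b (ps n n)) = fzero"
      unfolding ps_n ftheta_def omega_part_def fone_def fzero_def
      by (intro ext sum.neutral ballI) auto
    then have l: "fd n (ftheta n (omega_part n b (ps n n))) = fzero" by (simp add: fd_fzero)
    have r: "fsmul (of_int b + 1) (omega_part n (b + 1) (ps n n)) = fzero"
    proof (intro ext)
      fix S x
      show "fsmul (of_int b + 1) (omega_part n (b + 1) (ps n n)) S x = fzero S x"
      proof (cases "S = {}")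
        case True
        then show ?thesis unfolding ps_n fsmul_def omega_part_def fone_def fzero_def
          by (cases "b + 1 = 0") auto
      next
        case False
        then show ?thesis unfolding ps_n fsmul_def omega_part_def fone_def fzero_def by simp
      qed
    qed
    show "fd n (ftheta n (omega_part n b (ps n n))) = fsmul (of_int b + 1) (omega_part n (b + 1) (ps n n))"
      using l r by simp
  qed
next
  case (step m)
  define X where "X = ps n (Suc m)"
  have mn: "m < n" using step(2) .
  have XP: "VAN X" "CST X" using ps_props[of "Suc m" n] mn unfolding X_def by auto
  define Om where "Om p = omega_part n p X" for p
  have OV: "VAN (Om p)" for p unfolding Om_def using XP by (simp add: VAN_omega)
  have OC: "CST (Om p)" for p unfolding Om_def using XP by (simp add: CST_omega)
  have OD: "DF (Om p)" for p using OC by (rule DF_cst)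
  have OTD: "DF (ftheta n (Om p))" for p using OD by (rule DF_theta)
  have IH: "fd n (ftheta n (Om p)) = fsmul (of_int p + 1) (Om (p + 1))" for p
    using step(3) unfolding Om_def X_def by blast
  have om: "omega_part n p (ps n m) = fadd (Eg m (Om (p - 1))) (Eg (n + m) (Om p))" for p
    unfolding ps_step[OF mn] omega_fadd Om_def X_def[symmetric]
    using mn by (simp add: omega_E_lo omega_E_hi)
  show ?case
  proof
    fix b :: int
    have t1: "ftheta n (Eg m (Om (b - 1))) = fsub fzero (Eg m (ftheta n (Om (b - 1))))"
      using mn OV by (simp add: theta_E)
    have t2: "ftheta n (Eg (n + m) (Om b)) = fsub (mulf (\<lambda>x. x m) (Om b)) (Eg (n + m) (ftheta n (Om b)))"
      using mn OV by (simp add: theta_E)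
    have d1: "DF (fsub fzero (Eg m (ftheta n (Om (b - 1)))))"
      by (intro DF_fsub DF_fzero DF_Eg OTD)
    have d2: "DF (fsub (mulf (\<lambda>x. x m) (Om b)) (Eg (n + m) (ftheta n (Om b))))"
      by (intro DF_fsub DF_mulf_coord DF_Eg OTD OD)
    have "fd n (ftheta n (omega_part n b (ps n m)))
        = fadd (fsub fzero (fsmul (-1) (Eg m (fd n (ftheta n (Om (b - 1)))))))
               (fsub (Eg m (Om b)) (fsmul (-1) (Eg (n + m) (fd n (ftheta n (Om b))))))"
      unfolding om theta_fadd t1 t2 fd_fadd[OF d1 d2]
      by (simp add: fd_fsub DF_fzero DF_Eg OTD DF_mulf_coord OD fd_fzero fd_E fd_mulf OC OV mn)
    also have "\<dots> = fadd (fsub fzero (fsmul (-1) (Eg m (fsmul (of_int b) (Om b)))))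
               (fsub (Eg m (Om b)) (fsmul (-1) (Eg (n + m) (fsmul (of_int b + 1) (Om (b + 1))))))"
      by (simp add: IH)
    also have "\<dots> = fsmul (of_int b + 1) (omega_part n (b + 1) (ps n m))"
      unfolding om Eg_fsmul by (simp add: fun_eq_iff fadd_def fsub_def fsmul_def fzero_def algebra_simps)
    finally show "fd n (ftheta n (omega_part n b (ps n m))) = fsmul (of_int b + 1) (omega_part n (b + 1) (ps n m))" .
  qed
qed

lemma claim1: "fd n (nu n a) = fsmul (of_int a + 1) (psi_part n (a + 1))"
  unfolding nu_def psi_part_def psi_ps using claim1_ps[of 0 n] by simp

lemma claim4:
  "(\<lambda>j. fwedge (kappa1 n j) (nu n a))
        = (\<lambda>j. fsub (fwedge (kappaV n j) (psi_part n a))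
                     (fwedge (fd n (kappaV n j)) (nu n (a - 1))))"
proof (intro ext)
  fix j S x
  show "fwedge (kappa1 n j) (nu n a) S x = fsub (fwedge (kappaV n j) (psi_part n a))
                     (fwedge (fd n (kappaV n j)) (nu n (a - 1))) S x"
  proof (cases "j < n")
    case True
    have l: "lin_fun n (unitv j) = (\<lambda>x. x j)"
    proof
      fix x
      have "lin_fun n (unitv j) x = (\<Sum>k<n. if k = j then x k else 0)"
        unfolding lin_fun_def by (intro sum.cong) (auto simp: unitv_def)
      then show "lin_fun n (unitv j) x = x j" using True by (simp add: sum.delta)
    qed
    have "kappa1 n j = covec n (unitv j)" "kappaV n j = fun0 (lin_fun n (unitv j))"
      using True l by (simp_all add: kappa1_def kappaV_def)
    then show ?thesis using claim3[of n "unitv j" a] by simp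
  next
    case False
    have z: "fwedge fzero b = fzero" for b by (simp add: fun_eq_iff fwedge_def fzero_def)
    have "kappa1 n j = fzero" "kappaV n j = fzero" using False by (simp_all add: kappa1_def kappaV_def)
    then show ?thesis by (simp only: z fd_fzero) (simp add: fsub_def fzero_def)
  qed
qed


theorem mainTheorem15:
  fixes n :: nat and c :: "nat \<Rightarrow> real" and a :: int
  shows "fd n (nu n a) = fsmul (of_int a + 1) (psi_part n (a + 1))
    \<and> fwedge (covec n c) (psi_part n a)
        = fsmul (-1) (fwedge (fd n (fun0 (lin_fun n c))) (psi_part n (a - 1)))
    \<and> fwedge (covec n c) (nu n a)
        = fsub (fwedge (fun0 (lin_fun n c)) (psi_part n a))
               (fwedge (fd n (fun0 (lin_fun n c))) (nu n (a - 1)))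
    \<and> (\<lambda>j. fwedge (kappa1 n j) (nu n a))
        = (\<lambda>j. fsub (fwedge (kappaV n j) (psi_part n a))
                     (fwedge (fd n (kappaV n j)) (nu n (a - 1))))"
  using claim1 claim2 claim3 claim4 by blast

end
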